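(* For all $\alpha,\beta\in\mathbb{R}$, \[ \|R_x(\alpha)R_y(\beta)-\mathrm{Id}\|\le\sqrt{\alpha^2+\beta^2}, \] with equality only for $\alpha=\beta=0$.
   Context: $R_x(\alpha)=\begin{pmatrix}1&0&0\\0&\cos\alpha&-\sin\alpha\\0&\sin\alpha&\cos\alpha\end{pmatrix}$, $R_y(\alpha)=\begin{pmatrix}\cos\alpha&0&-\sin\alpha\\0&1&0\\ \sin\alpha&0&\cos\alpha\end{pmatrix}$. $\|\cdot\|$ denotes the operator norm induced by the Euclidean norm. *)

theory Defs
  imports "HOL-Analysis.Analysis"
begin

definition Rx :: "real \<Rightarrow> real^3^3" where
  "Rx a = vector [vector [1, 0, 0],
                  vector [0, cos a, - sin a],
                  vector [0, sin a, cos a]]"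

definition Ry :: "real \<Rightarrow> real^3^3" where
  "Ry a = vector [vector [cos a, 0, - sin a],
                  vector [0, 1, 0],
                  vector [sin a, 0, cos a]]"

definition opnorm :: "real^3^3 \<Rightarrow> real" where
  "opnorm M = onorm (\<lambda>v. M *v v)"

end

theory Submission
  imports Defs
begin
lemma sin_lt_pos: assumes "0 < (y::real)" shows "sin y < y"
proof (cases "y \<le> 1")
  case True
  have s: "0 < sin (y/2)" using assms True pi_gt3 by (intro sin_gt_zero) auto
  have c: "cos (y/2) < 1" using cos_monotone_0_pi[of 0 "y/2"] assms True pi_gt3 by simp
  have "sin y = 2 * sin (y/2) * cos (y/2)" using sin_double[of "y/2"] by simp
  also have "\<dots> < 2 * sin (y/2)" using s c by simp
  also have "\<dots> \<le> y" using sin_x_le_x[of "y/2"] assms by simp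
  finally show ?thesis .
next
  case False then show ?thesis using sin_le_one[of y] by linarith
qed

lemma abs_lt_pos: assumes "0 < (y::real)" shows "\<bar>sin y\<bar> < y"
proof (cases "y \<le> 1")
  case True
  then have "0 < sin y" using assms pi_gt3 by (intro sin_gt_zero) auto
  then show ?thesis using sin_lt_pos[OF assms] by simp
next
  case False then show ?thesis using abs_sin_le_one[of y] by linarith
qed

lemma sin_sq_lt: assumes "(y::real) \<noteq> 0" shows "(sin y)\<^sup>2 < y\<^sup>2"
proof -
  have "\<bar>sin y\<bar> < \<bar>y\<bar>"
  proof (cases "y > 0")
    case True then show ?thesis using abs_lt_pos[of y] by simp
  next
    case False then have "-y > 0" using assms by simp
    then show ?thesis using abs_lt_pos[of "-y"] by simp
  qed
  then show ?thesis using power_strict_mono[of "\<bar>sin y\<bar>" "\<bar>y\<bar>" 2] by simp  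
qed

lemma one_minus_cos: "1 - cos (x::real) = 2 * (sin (x/2))\<^sup>2"
  using cos_double_sin[of "x/2"] by simp

lemma cos_bound: "1 - cos (x::real) \<le> x\<^sup>2 / 2"
proof -
  have "(sin (x/2))\<^sup>2 \<le> (x/2)\<^sup>2" using abs_sin_x_le_abs_x[of "x/2"]
    by (metis abs_ge_zero power2_abs power_mono)
  then show ?thesis unfolding one_minus_cos by (simp add: power_divide)
qed

lemma cos_bound_strict: "x \<noteq> 0 \<Longrightarrow> 1 - cos (x::real) < x\<^sup>2 / 2"
  using sin_sq_lt[of "x/2"] unfolding one_minus_cos by (simp add: power_divide)

lemma mv: "(Rx a ** Ry b - mat 1) *v v = vector [
   (cos b - 1) * v$1 - sin b * v$3,
   - sin a * sin b * v$1 + (cos a - 1) * v$2 - sin a * cos b * v$3,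
   cos a * sin b * v$1 + sin a * v$2 + (cos a * cos b - 1) * v$3]"
  unfolding vec_eq_iff forall_3
  by (simp add: Rx_def Ry_def matrix_vector_mult_def matrix_matrix_mult_def sum_3 mat_def algebra_simps)

lemma key:
  fixes A A' B B' v1 v2 v3 :: real
  assumes "A\<^sup>2 + A'\<^sup>2 = 1" "B\<^sup>2 + B'\<^sup>2 = 1"
  defines "ca \<equiv> 1 - 2*A\<^sup>2" and "sa \<equiv> 2*A*A'" and "cb \<equiv> 1 - 2*B\<^sup>2" and "sb \<equiv> 2*B*B'"
  shows "((cb - 1) * v1 - sb * v3)\<^sup>2 + (- sa * sb * v1 + (ca - 1) * v2 - sa * cb * v3)\<^sup>2
     + (ca * sb * v1 + sa * v2 + (ca * cb - 1) * v3)\<^sup>2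
     = (3 - ca - cb - ca*cb) * (v1\<^sup>2 + v2\<^sup>2 + v3\<^sup>2) - (2*(A*B'* v1 - A'*B* v2 - A*B* v3))\<^sup>2"
  using assms unfolding ca_def sa_def cb_def sb_def by algebra


lemma norm3: "(norm (w::real^3))\<^sup>2 = (w$1)\<^sup>2 + (w$2)\<^sup>2 + (w$3)\<^sup>2"
  by (simp only: power2_norm_eq_inner) (simp add: inner_vec_def sum_3 power2_eq_square)

theorem lemma3p4:
  fixes \<alpha> \<beta> :: real
  shows "opnorm (Rx \<alpha> ** Ry \<beta> - mat 1) \<le> sqrt (\<alpha>\<^sup>2 + \<beta>\<^sup>2)
       \<and> (opnorm (Rx \<alpha> ** Ry \<beta> - mat 1) = sqrt (\<alpha>\<^sup>2 + \<beta>\<^sup>2) \<longrightarrow> \<alpha> = 0 \<and> \<beta> = 0)"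
proof -
  define ca where "ca = cos \<alpha>"
  define cb where "cb = cos \<beta>"
  define K where "K = 3 - ca - cb - ca * cb"
  have u: "0 \<le> 1 - ca" "1 - ca \<le> 2" "0 \<le> 1 - cb" "1 - cb \<le> 2"
    unfolding ca_def cb_def using cos_le_one[of \<alpha>] cos_le_one[of \<beta>] cos_ge_minus_one[of \<alpha>] cos_ge_minus_one[of \<beta>] by linarith+
  have Keq: "K = 2 * (1 - ca) + 2 * (1 - cb) - (1 - ca) * (1 - cb)" unfolding K_def by algebra
  have K0a: "0 \<le> (1 - ca) * (2 - (1 - cb))" using u by (intro mult_nonneg_nonneg) auto
  have K0b: "K = (1 - ca) * (2 - (1 - cb)) + 2 * (1 - cb)" unfolding Keq by algebra
  have K0: "0 \<le> K" unfolding K0b using K0a u(3) by (intro add_nonneg_nonneg) auto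
  have Kle: "K \<le> 2 * (1 - ca) + 2 * (1 - cb)" unfolding Keq using u by simp
  have ba: "1 - ca \<le> \<alpha>\<^sup>2 / 2" "1 - cb \<le> \<beta>\<^sup>2 / 2" unfolding ca_def cb_def by (rule cos_bound)+
  have Kb: "K \<le> \<alpha>\<^sup>2 + \<beta>\<^sup>2" using Kle ba by argo
  have Ks: "K < \<alpha>\<^sup>2 + \<beta>\<^sup>2" if "\<not> (\<alpha> = 0 \<and> \<beta> = 0)"
  proof (cases "\<alpha> = 0")
    case True
    then have "\<beta> \<noteq> 0" using that by simp
    then have "1 - cb < \<beta>\<^sup>2 / 2" unfolding cb_def by (rule cos_bound_strict)
    then show ?thesis using Kle ba by argo
  next
    case False
    then have "1 - ca < \<alpha>\<^sup>2 / 2" unfolding ca_def by (rule cos_bound_strict)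
    then show ?thesis using Kle ba by argo
  qed
  have pt: "norm ((Rx \<alpha> ** Ry \<beta> - mat 1) *v v) \<le> sqrt K * norm v" for v
  proof -
    define A where "A = sin (\<alpha>/2)"
    define A' where "A' = cos (\<alpha>/2)"
    define B where "B = sin (\<beta>/2)"
    define B' where "B' = cos (\<beta>/2)"
    have h1: "A\<^sup>2 + A'\<^sup>2 = 1" "B\<^sup>2 + B'\<^sup>2 = 1" unfolding A_def A'_def B_def B'_def by simp_all
    have h2: "cos \<alpha> = 1 - 2*A\<^sup>2" "sin \<alpha> = 2*A*A'" "cos \<beta> = 1 - 2*B\<^sup>2" "sin \<beta> = 2*B*B'"
      unfolding A_def A'_def B_def B'_def
      using cos_double_sin[of "\<alpha>/2"] sin_double[of "\<alpha>/2"] cos_double_sin[of "\<beta>/2"] sin_double[of "\<beta>/2"]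
      by simp_all
    have "(norm ((Rx \<alpha> ** Ry \<beta> - mat 1) *v v))\<^sup>2
        = K * (norm v)\<^sup>2 - (2*(A*B'* v$1 - A'*B* v$2 - A*B* v$3))\<^sup>2"
      unfolding mv norm3 vector_3 K_def ca_def cb_def h2
      by (rule key[OF h1])
    also have "\<dots> \<le> K * (norm v)\<^sup>2" by simp
    also have "\<dots> = (sqrt K * norm v)\<^sup>2" using K0 by (simp add: power_mult_distrib)
    finally show ?thesis
      by (meson K0 mult_nonneg_nonneg norm_ge_zero power2_le_imp_le real_sqrt_ge_zero)
  qed
  have on: "opnorm (Rx \<alpha> ** Ry \<beta> - mat 1) \<le> sqrt K"
    unfolding opnorm_def by (rule onorm_le) (rule pt)
  have l1: "sqrt K \<le> sqrt (\<alpha>\<^sup>2 + \<beta>\<^sup>2)" using Kb by simp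
  have l2: "sqrt K < sqrt (\<alpha>\<^sup>2 + \<beta>\<^sup>2)" if "\<not> (\<alpha> = 0 \<and> \<beta> = 0)"
    using Ks[OF that] by simp
  show ?thesis
  proof (rule conjI)
    show "opnorm (Rx \<alpha> ** Ry \<beta> - mat 1) \<le> sqrt (\<alpha>\<^sup>2 + \<beta>\<^sup>2)" using on l1 by argo
  next
    show "opnorm (Rx \<alpha> ** Ry \<beta> - mat 1) = sqrt (\<alpha>\<^sup>2 + \<beta>\<^sup>2) \<longrightarrow> \<alpha> = 0 \<and> \<beta> = 0"
    proof
    assume e: "opnorm (Rx \<alpha> ** Ry \<beta> - mat 1) = sqrt (\<alpha>\<^sup>2 + \<beta>\<^sup>2)"
    show "\<alpha> = 0 \<and> \<beta> = 0"
    proof (rule ccontr)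
      assume "\<not> (\<alpha> = 0 \<and> \<beta> = 0)"
      from l2[OF this] on e show False by argo
    qed
    qed
  qed
qed

end
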